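(* Let $q=8m+3$ be a prime power ($m\ge1$), and let $I$, $E_0,E_1,E_2,E_3$ be as in the context. Then in $\mathbb{Z}[(\mathbb{F}_{q^2},+)]$, $$E_0E_1^{(-1)}+E_1E_0^{(-1)}+E_2E_3^{(-1)}+E_3E_2^{(-1)}=\sum_{h=0,1}\sum_{i,j\in I}\Big(C_{i+h}^{(8,q^2)}\big(C_{j+2+h}^{(8,q^2)}\big)^{(-1)}+C_{i+2+h}^{(8,q^2)}\big(C_{j+h}^{(8,q^2)}\big)^{(-1)}\Big)+8m(4m+1)\cdot 0_{\mathbb{F}_{q^2}}+m(28m+5)\,\mathbb{F}_{q^2}^\ast.$$
   Context: Let $\omega$ be a primitive element of $\mathbb{F}_{q^2}$, $C_i^{(N,q^2)}=\omega^i\langle\omega^N\rangle$ for $N\mid q^2-1$ (index mod $N$), and $L_i=C_i^{(q+1,q^2)}$ (index mod $q+1$). Let $I\subseteq\{0,1,\dots,7\}$ with $|I|=3$ and $I\cap\{x+4\bmod 8:x\in I\}=\emptyset$; let $y$ be the unique element of $I$ whose parity differs from that of the other two. Let $J_1=\{y+2+4i\bmod (q+1):0\le i\le m-1\}$ and $J_2=\{y+4i\bmod(q+1):0\le i\le m-1\}$. Define $E_0=\bigcup_{i\in I}C_i^{(8,q^2)}\cup\bigcup_{i\in J_1}L_i$, $E_1=\bigcup_{i\in I}C_{i+2}^{(8,q^2)}\cup\bigcup_{i\in J_2}L_i$, $E_2=\bigcup_{i\in I}C_{i+1}^{(8,q^2)}\cup\bigcup_{i\in J_1}L_{i+1}$,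 $E_3=\bigcup_{i\in I}C_{i+3}^{(8,q^2)}\cup\bigcup_{i\in J_2}L_{i+1}$. Subsets are identified with group ring elements $\sum_{x\in X}x$, $X^{(-1)}=\{-x:x\in X\}$, $\mathbb{F}_{q^2}^\ast=\mathbb{F}_{q^2}\setminus\{0\}$, and $0_{\mathbb{F}_{q^2}}$ is the identity of the group ring. *)

theory Defs
  imports Main "HOL-Computational_Algebra.Primes"
begin

definition primitive_elem :: "'a::{finite,field} \<Rightarrow> bool" where
  "primitive_elem \<omega> \<longleftrightarrow> \<omega> \<noteq> 0 \<and> (\<forall>x::'a. x \<noteq> 0 \<longrightarrow> (\<exists>k::nat. \<omega> ^ k = x))"

text \<open>Cyclotomic class C_i^{(N)} = omega^i <omega^N> (index automatically mod N).\<close>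
definition cyc :: "'a::field \<Rightarrow> nat \<Rightarrow> nat \<Rightarrow> 'a set" where
  "cyc \<omega> N i = {\<omega> ^ (i + N * k) | k. True}"

text \<open>Group ring Z[(F,+)]: elements are coefficient functions F => int.\<close>
definition gr_set :: "'a set \<Rightarrow> 'a \<Rightarrow> int" where
  "gr_set X = (\<lambda>z. if z \<in> X then 1 else 0)"

definition gr_mult :: "('a::{finite,ab_group_add} \<Rightarrow> int) \<Rightarrow> ('a \<Rightarrow> int) \<Rightarrow> 'a \<Rightarrow> int" where
  "gr_mult f g = (\<lambda>z. \<Sum>x\<in>UNIV. f x * g (z - x))"

definition gr_inv :: "('a::ab_group_add \<Rightarrow> int) \<Rightarrow> 'a \<Rightarrow> int" where
  "gr_inv f = (\<lambda>z. f (- z))"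

end

theory Submission
  imports Defs "HOL-Number_Theory.Residues"
begin


lemma fin8: "(u::nat) < 8 \<Longrightarrow> u = 0 \<or> u = 1 \<or> u = 2 \<or> u = 3 \<or> u = 4 \<or> u = 5 \<or> u = 6 \<or> u = 7" by linarith
lemma fin4: "(u::nat) < 4 \<Longrightarrow> u = 0 \<or> u = 1 \<or> u = 2 \<or> u = 3" by linarith

lemma mod84b: "(u::nat) < 8 \<Longrightarrow> v < 8 \<Longrightarrow> u mod 4 = v mod 4 \<longleftrightarrow> u = v \<or> u = (v+4) mod 8"
  apply (drule fin8, drule fin8)
  apply (elim disjE)
  apply simp_all
  done

lemma mod84: "(a::nat) mod 4 = i mod 4 \<longleftrightarrow> a mod 8 = i mod 8 \<or> a mod 8 = (i+4) mod 8"
proof -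
  have "a mod 4 = a mod 8 mod 4" "i mod 4 = i mod 8 mod 4" by (simp_all add: mod_mod_cancel)
  moreover have "(i+4) mod 8 = (i mod 8 + 4) mod 8" by (rule mod_add_left_eq[symmetric])
  ultimately show ?thesis using mod84b[of "a mod 8" "i mod 8"] by simp
qed

lemma mod8_4: "(i::nat) mod 8 \<noteq> (i+4) mod 8"
proof -
  have "(i+4) mod 8 = (i mod 8 + 4) mod 8" by (rule mod_add_left_eq[symmetric])
  moreover have "i mod 8 < 8" by simp
  ultimately show ?thesis apply - apply (drule fin8) apply (elim disjE) apply simp_all done
qed

lemma mod_ne2: "(k+2) mod 4 \<noteq> (k::nat) mod 4"
proof -
  have "(k+2) mod 4 = (k mod 4 + 2) mod 4" by (rule mod_add_left_eq[symmetric])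
  moreover have "k mod 4 < 4" by simp
  ultimately show ?thesis apply - apply (drule fin4) apply (elim disjE) apply simp_all done
qed

lemma Ifact_a: "(i::nat) \<le> 7 \<Longrightarrow> y \<le> 7 \<Longrightarrow> (i = y \<or> odd i \<noteq> odd y) \<Longrightarrow> i mod 4 \<noteq> (y+2) mod 4"
  apply (subgoal_tac "i < 8" "y < 8")
    apply (drule fin8, drule fin8)
    apply (elim disjE)
  apply simp_all
  done

lemma Ifact_b: "(i::nat) \<le> 7 \<Longrightarrow> j \<le> 7 \<Longrightarrow> i \<noteq> j \<Longrightarrow> i mod 4 = j mod 4 \<Longrightarrow> j = (i+4) mod 8"
  apply (subgoal_tac "i < 8" "j < 8")
    apply (drule fin8, drule fin8)
    apply (elim disjE)
  apply simp_all
  done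

lemma mod_add_rcancel4: "((a::nat) + s) mod n = (b + s) mod n \<longleftrightarrow> a mod n = b mod n"
  using cong_add_rcancel_nat[of a s b n] by (simp add: cong_def)

lemma psi4: "(u::nat) < 4 \<Longrightarrow> l < 4 \<Longrightarrow>
  (if l = (u + 0 + 2) mod 4 then 1 else 0) + (if l = (u + 1 + 2) mod 4 then 1 else 0)
  + (if l = (u + 2 + 2) mod 4 then 1 else 0) + (if l = (u + 3 + 2) mod 4 then 1 else (0::int)) = 1"
  apply (drule fin4, drule fin4)
  apply (elim disjE)
  apply simp_all
  done

lemma sum_sq_int: "(\<Sum>t<n. \<Sum>t'<n. 1 - a t - b t') = int n * int n - int n * (\<Sum>t<n. a t) - int n * (\<Sum>t<n. (b t::int))"
  by (simp add: sum_subtractf sum_distrib_left right_diff_distrib)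


definition NN :: "'a::{finite,ab_group_add} set \<Rightarrow> 'a set \<Rightarrow> 'a \<Rightarrow> nat" where
  "NN X Y z = card {x\<in>X. x - z \<in> Y}"

lemma gr_NN: "gr_mult (gr_set X) (gr_inv (gr_set Y)) z = int (NN X Y z)"
proof -
  have "gr_mult (gr_set X) (gr_inv (gr_set Y)) z = (\<Sum>x\<in>UNIV. if x \<in> {x\<in>X. x - z \<in> Y} then 1 else 0)"
    unfolding gr_mult_def gr_inv_def gr_set_def by (intro sum.cong) auto
  also have "\<dots> = int (card {x\<in>X. x - z \<in> Y})"
    by (simp add: sum.If_cases)
  finally show ?thesis unfolding NN_def .
qed

lemma NN_Un: "X1 \<inter> X2 = {} \<Longrightarrow> NN (X1 \<union> X2) Y z = NN X1 Y z + NN X2 Y z"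
  unfolding NN_def
  by (subst card_Un_disjoint[symmetric]) (auto intro!: arg_cong[where f=card])

lemma NN_Un2: "Y1 \<inter> Y2 = {} \<Longrightarrow> NN X (Y1 \<union> Y2) z = NN X Y1 z + NN X Y2 z"
  unfolding NN_def
  by (subst card_Un_disjoint[symmetric]) (auto intro!: arg_cong[where f=card])

lemma NN_UN:
  assumes "finite A" "\<And>i j. i \<in> A \<Longrightarrow> j \<in> A \<Longrightarrow> i \<noteq> j \<Longrightarrow> X i \<inter> X j = {}"
  shows "NN (\<Union>i\<in>A. X i) Y z = (\<Sum>i\<in>A. NN (X i) Y z)"
proof -
  have "{x\<in>(\<Union>i\<in>A. X i). x - z \<in> Y} = (\<Union>i\<in>A. {x\<in>X i. x - z \<in> Y})" by auto
  then show ?thesis unfolding NN_def using assms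
    by (simp add: card_UN_disjoint) (subst card_UN_disjoint; auto)
qed

lemma NN_UN2:
  assumes "finite A" "\<And>i j. i \<in> A \<Longrightarrow> j \<in> A \<Longrightarrow> i \<noteq> j \<Longrightarrow> Y i \<inter> Y j = {}"
  shows "NN X (\<Union>i\<in>A. Y i) z = (\<Sum>i\<in>A. NN X (Y i) z)"
proof -
  have "{x\<in>X. x - z \<in> (\<Union>i\<in>A. Y i)} = (\<Union>i\<in>A. {x\<in>X. x - z \<in> Y i})" by auto
  then show ?thesis unfolding NN_def using assms
    by (simp) (subst card_UN_disjoint; auto)
qed

locale fsetup =
  fixes q m :: nat and w :: "'a::{finite,field}"
  assumes pp: "\<exists>p k. prime p \<and> k \<ge> 1 \<and> q = p ^ k"
    and qd: "q = 8*m+3" and mpos: "m \<ge> 1"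
    and cardF: "card (UNIV::'a set) = q^2"
    and prim: "primitive_elem w"
begin

definition "QQ = q^2 - 1"
definition "hh = (q+1)*(4*m+1)"

lemma QQ_m: "QQ = 64*m*m + 48*m + 8"
  unfolding QQ_def using qd by (simp add: power2_eq_square algebra_simps)

lemma QQ_eq: "QQ = (q+1)*(q-1)"
  unfolding QQ_m using qd by (simp add: algebra_simps)

lemma QQ_hh: "QQ = 2*hh"
  unfolding QQ_m hh_def using qd by (simp add: algebra_simps)

lemma QQ_pos: "QQ > 0" unfolding QQ_m by simp

lemma dvd8: "8 dvd QQ"
proof -
  have "QQ = 8*(8*m*m+6*m+1)" unfolding QQ_m by (simp add: algebra_simps)
  then show ?thesis by simp
qed

lemma dvdq1: "(q+1) dvd QQ" unfolding QQ_eq by (rule dvd_triv_left)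
lemma dvd4q: "4 dvd (q+1)" proof - have "q+1 = 4*(2*m+1)" using qd by simp then show ?thesis by simp qed
lemma dvd4: "4 dvd QQ"
proof -
  have "QQ = 4*(2*(8*m*m+6*m+1))" unfolding QQ_m by (simp add: algebra_simps)
  then show ?thesis by (metis dvd_triv_left)
qed

lemma hh_mod8: "hh mod 8 = 4"
proof -
  define K where "K = 4*m*m+3*m"
  have "hh = 8*K + 4" unfolding hh_def K_def using qd by (simp add: algebra_simps)
  then show ?thesis by presburger
qed

lemma hh_modq: "hh mod (q+1) = 0" unfolding hh_def by (metis mod_mult_self1_is_0 mod_mult_self2_is_0)

lemma card_nz: "card (UNIV - {0::'a}) = QQ"
  using cardF unfolding QQ_def by (simp add: card_Diff_singleton)

lemma pow_QQ:
  assumes "x \<noteq> (0::'a)" shows "x ^ QQ = 1"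
proof -
  have "(\<Prod>y\<in>UNIV-{0}. x * y) = x ^ card (UNIV - {0::'a}) * \<Prod>(UNIV-{0})"
    by (simp add: prod.distrib)
  also have "(\<Prod>y\<in>UNIV-{0}. x * y) = (\<Prod>y\<in>UNIV-{0::'a}. y)"
    by (rule prod.reindex_bij_witness[of _ "\<lambda>y. y / x" "\<lambda>y. x * y"]) (use assms in auto)
  finally have "\<Prod>(UNIV-{0::'a}) * 1 = x ^ QQ * \<Prod>(UNIV-{0::'a})" by (simp add: card_nz)
  moreover have "\<Prod>(UNIV-{0::'a}) \<noteq> 0" by (simp add: prod_zero_iff)
  ultimately show ?thesis by simp
qed

lemma w_nz: "w \<noteq> 0" using prim unfolding primitive_elem_def by simp

lemma w_pow_mod: "w ^ a = w ^ (a mod QQ)"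
proof -
  have "w ^ a = w ^ (QQ * (a div QQ) + a mod QQ)" by (simp only: mult_div_mod_eq)
  also have "\<dots> = (w ^ QQ) ^ (a div QQ) * w ^ (a mod QQ)" by (simp only: power_add power_mult)
  finally show ?thesis using pow_QQ[OF w_nz] by simp
qed

lemma inj_w: "inj_on (\<lambda>k. w ^ k) {..<QQ}"
proof (rule eq_card_imp_inj_on)
  have "(\<lambda>k. w ^ k) ` {..<QQ} = UNIV - {0}"
  proof
    show "(\<lambda>k. w ^ k) ` {..<QQ} \<subseteq> UNIV - {0}" using w_nz by auto
    show "UNIV - {0} \<subseteq> (\<lambda>k. w ^ k) ` {..<QQ}"
    proof
      fix x :: 'a assume "x \<in> UNIV - {0}"
      then obtain k where "w ^ k = x" using prim unfolding primitive_elem_def by auto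
      then have "x = w ^ (k mod QQ)" using w_pow_mod by simp
      moreover have "k mod QQ < QQ" using QQ_pos by simp
      ultimately show "x \<in> (\<lambda>k. w ^ k) ` {..<QQ}" by auto
    qed
  qed
  then show "card ((\<lambda>k. w ^ k) ` {..<QQ}) = card {..<QQ}" by (simp add: card_nz)
qed simp

lemma w_pow_eq: "w ^ a = w ^ b \<longleftrightarrow> a mod QQ = b mod QQ"
proof
  assume "w ^ a = w ^ b"
  then have "w ^ (a mod QQ) = w ^ (b mod QQ)" using w_pow_mod by metis
  then show "a mod QQ = b mod QQ" using inj_w QQ_pos by (auto dest: inj_onD)
next
  assume "a mod QQ = b mod QQ" then show "w ^ a = w ^ b" using w_pow_mod by metis
qed

definition lg :: "'a \<Rightarrow> nat" where "lg x = (SOME e. e < QQ \<and> w ^ e = x)"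

lemma lg: assumes "x \<noteq> 0" shows "lg x < QQ" "w ^ lg x = x"
proof -
  obtain k where "w ^ k = x" using prim assms unfolding primitive_elem_def by auto
  then have "k mod QQ < QQ \<and> w ^ (k mod QQ) = x" using w_pow_mod QQ_pos by simp
  then have "lg x < QQ \<and> w ^ lg x = x" unfolding lg_def by (rule someI)
  then show "lg x < QQ" "w ^ lg x = x" by auto
qed

lemma mem_cyc_pow:
  assumes "N dvd QQ" shows "w ^ e \<in> cyc w N i \<longleftrightarrow> e mod N = i mod N"
proof
  assume "w ^ e \<in> cyc w N i"
  then obtain k where "w ^ e = w ^ (i + N*k)" unfolding cyc_def by auto
  then have "e mod QQ = (i + N*k) mod QQ" using w_pow_eq by simp
  then have "e mod QQ mod N = (i + N*k) mod QQ mod N" by simp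
  then show "e mod N = i mod N" using assms by (simp add: mod_mod_cancel)
next
  assume h: "e mod N = i mod N"
  obtain c where c: "QQ = N*c" using assms by (auto simp: dvd_def)
  have "(e + QQ*i) mod N = e mod N" unfolding c by (metis mod_mult_self2 mult.assoc)
  also have "\<dots> = i mod N" by (rule h)
  finally have m1: "(e + QQ*i) mod N = i mod N" .
  have "1*i \<le> QQ*i" by (rule mult_le_mono1) (use QQ_pos in simp)
  then have le: "i \<le> e + QQ*i" by linarith
  have "N dvd (e + QQ*i) - i" using mod_eq_dvd_iff_nat[OF le] m1 by simp
  then obtain k where k0: "(e + QQ*i) - i = N*k" by (auto simp: dvd_def)
  have k: "e + QQ*i = i + N*k" using k0 le by simp
  have "w ^ e = w ^ (e + QQ*i)" using w_pow_eq by simp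
  then show "w ^ e \<in> cyc w N i" unfolding cyc_def k by auto
qed

lemma zero_notin_cyc: "0 \<notin> cyc w N i"
  unfolding cyc_def using w_nz by auto

lemma mem_cyc:
  assumes "N dvd QQ" shows "x \<in> cyc w N i \<longleftrightarrow> x \<noteq> 0 \<and> lg x mod N = i mod N"
proof (cases "x = 0")
  case True then show ?thesis using zero_notin_cyc by auto
next
  case False
  then show ?thesis using mem_cyc_pow[OF assms, of "lg x" i] lg[OF False] by simp
qed

end


context fsetup
begin

lemma cyc_shift:
  assumes "N dvd QQ" shows "w^a * x \<in> cyc w N (i + a) \<longleftrightarrow> x \<in> cyc w N i"
proof (cases "x = 0")
  case True then show ?thesis using zero_notin_cyc by simp
next
  case False
  have "w^a * x = w^(a + lg x)" using lg[OF False] by (simp add: power_add)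
  then have "w^a * x \<in> cyc w N (i + a) \<longleftrightarrow> (a + lg x) mod N = (i + a) mod N"
    using mem_cyc_pow[OF assms] by simp
  also have "\<dots> \<longleftrightarrow> lg x mod N = i mod N"
    using cong_add_lcancel_nat[of a "lg x" i N] by (simp add: cong_def add.commute)
  finally show ?thesis using mem_cyc[OF assms] False by simp
qed

lemma cyc_eq: "N dvd QQ \<Longrightarrow> i mod N = j mod N \<Longrightarrow> cyc w N i = cyc w N j"
  by (auto simp: mem_cyc)

lemma cyc_disj: "N dvd QQ \<Longrightarrow> i mod N \<noteq> j mod N \<Longrightarrow> cyc w N i \<inter> cyc w N j = {}"
  by (auto simp: mem_cyc)

lemma w_hh: "w ^ hh = -1"
proof -
  have "(w^hh)^2 = 1" using pow_QQ[OF w_nz] QQ_hh by (simp add: power_mult[symmetric] mult.commute)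
  moreover have "w^hh \<noteq> 1"
  proof
    assume "w^hh = 1"
    then have "w^hh = w^0" by simp
    then have "hh mod QQ = 0 mod QQ" using w_pow_eq by blast
    moreover have "hh < QQ" "0 < hh" using QQ_hh QQ_pos by auto
    ultimately show False by simp
  qed
  ultimately show ?thesis using power2_eq_1_iff by blast
qed

lemma neg_mem: "N dvd QQ \<Longrightarrow> -x \<in> cyc w N (i + hh) \<longleftrightarrow> x \<in> cyc w N i"
  using cyc_shift[of N hh x i] w_hh by simp

lemma neg_D: "-x \<in> cyc w 8 (i + 4) \<longleftrightarrow> x \<in> cyc w 8 i"
proof -
  have "(i + hh) mod 8 = (i + hh mod 8) mod 8" by (rule mod_add_right_eq[symmetric])
  then have "(i + 4) mod 8 = (i + hh) mod 8" using hh_mod8 by simp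
  then have "cyc w 8 (i+4) = cyc w 8 (i + hh)" using cyc_eq dvd8 by blast
  then show ?thesis using neg_mem dvd8 by simp
qed

lemma neg_L: "-x \<in> cyc w (q+1) k \<longleftrightarrow> x \<in> cyc w (q+1) k"
proof -
  have "(k + hh) mod (q+1) = (k + hh mod (q+1)) mod (q+1)" by (rule mod_add_right_eq[symmetric])
  then have "k mod (q+1) = (k + hh) mod (q+1)" using hh_modq by simp
  then have "cyc w (q+1) k = cyc w (q+1) (k + hh)" using cyc_eq dvdq1 by blast
  then show ?thesis using neg_mem dvdq1 by simp
qed

lemma charq: "prime CHAR('a)" "\<exists>n. q = CHAR('a) ^ n"
proof -
  obtain p k where pk: "prime p" "k \<ge> 1" "q = p ^ k" using pp by auto
  have cp: "prime CHAR('a)" by (rule prime_CHAR_semidom, rule finite_imp_CHAR_pos, simp)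
  have "CHAR('a) dvd card (UNIV::'a set)" by (rule CHAR_dvd_CARD)
  moreover have "card (UNIV::'a set) = p ^ (k*2)" using cardF pk(3) by (simp add: power_mult)
  ultimately have "CHAR('a) dvd p ^ (k*2)" by simp
  then have "CHAR('a) dvd p" using cp prime_dvd_power by blast
  then have "CHAR('a) = p" using cp pk primes_dvd_imp_eq by blast
  then show "prime CHAR('a)" "\<exists>n. q = CHAR('a) ^ n" using cp pk by auto
qed

lemma frob: "(x + y :: 'a) ^ q = x ^ q + y ^ q"
proof -
  obtain n where n: "q = CHAR('a) ^ n" using charq(2) by blast
  show ?thesis by (rule freshmans_dream'[OF charq(1) n])
qed

lemma frob_diff: "(x - y :: 'a) ^ q = x ^ q - y ^ q"
  using frob[of "x - y" y] by (simp add: algebra_simps)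

lemma L0_iff:
  assumes "x \<noteq> 0" shows "x \<in> cyc w (q+1) 0 \<longleftrightarrow> x ^ q = x"
proof -
  define e where "e = lg x"
  have x: "x = w ^ e" using lg[OF assms] e_def by simp
  have q1: "q - 1 > 0" using qd by simp
  have "x ^ (q - 1) * x = x ^ q" using qd by (intro power_minus_mult) simp
  then have "x ^ q = x \<longleftrightarrow> x ^ (q - 1) * x = 1 * x" by simp
  also have "\<dots> \<longleftrightarrow> x ^ (q-1) = 1" using assms by simp
  also have "\<dots> \<longleftrightarrow> w ^ (e * (q-1)) = w ^ 0" unfolding x by (simp add: power_mult)
  also have "\<dots> \<longleftrightarrow> QQ dvd e * (q-1)" using w_pow_eq[of "e * (q-1)" 0] by (simp only: dvd_eq_mod_eq_0 mod_0)
  also have "\<dots> \<longleftrightarrow> (q+1) dvd e"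
  proof -
    have eq1: "(q+1)*(q-1) = (q-1)*(q+1)" "e*(q-1) = (q-1)*e" by (rule mult.commute)+
    show ?thesis unfolding QQ_eq eq1 by (rule nat_mult_dvd_cancel1[OF q1])
  qed
  also have "\<dots> \<longleftrightarrow> x \<in> cyc w (q+1) 0" using mem_cyc[OF dvdq1] assms e_def by (simp add: dvd_eq_mod_eq_0)
  finally show ?thesis by simp
qed

definition line :: "nat \<Rightarrow> 'a set" where "line k = insert 0 (cyc w (q+1) k)"

lemma line_iff: "x \<in> line k \<longleftrightarrow> (x / w^k) ^ q = x / w^k"
proof (cases "x = 0")
  case True then show ?thesis using qd unfolding line_def by simp
next
  case False
  have nz: "x / w^k \<noteq> 0" using False w_nz by simp
  have "x \<in> line k \<longleftrightarrow> w^k * (x / w^k) \<in> cyc w (q+1) (0 + k)"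
    using False w_nz unfolding line_def by simp
  also have "\<dots> \<longleftrightarrow> x / w^k \<in> cyc w (q+1) 0" by (rule cyc_shift[OF dvdq1])
  also have "\<dots> \<longleftrightarrow> (x / w^k) ^ q = x / w^k" by (rule L0_iff[OF nz])
  finally show ?thesis .
qed

lemma line_diff: "x \<in> line k \<Longrightarrow> y \<in> line k \<Longrightarrow> x - y \<in> line k"
  unfolding line_iff by (simp add: diff_divide_distrib frob_diff)

lemma zero_line: "0 \<in> line k" unfolding line_def by simp

lemma line_inter: "j mod (q+1) \<noteq> k mod (q+1) \<Longrightarrow> x \<in> line j \<Longrightarrow> x \<in> line k \<Longrightarrow> x = 0"
  unfolding line_def using cyc_disj[OF dvdq1, of j k] by blast

lemma card_L: "card (cyc w (q+1) k) = q - 1"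
proof -
  define f where "f t = w ^ (k + (q+1)*t)" for t
  have q1: "q - 1 > 0" using qd by simp
  have "cyc w (q+1) k = f ` {..<q-1}"
  proof
    show "f ` {..<q-1} \<subseteq> cyc w (q+1) k" unfolding f_def cyc_def by auto
    show "cyc w (q+1) k \<subseteq> f ` {..<q-1}"
    proof
      fix x assume "x \<in> cyc w (q+1) k"
      then obtain t where t: "x = w ^ (k + (q+1)*t)" unfolding cyc_def by auto
      have "(q+1)*t = (q+1)*((q-1)*(t div (q-1)) + t mod (q-1))" by simp
      then have tt: "(q+1)*t = (q+1)*(t mod (q-1)) + QQ*(t div (q-1))"
        unfolding QQ_eq by (simp add: algebra_simps)
      have "(k + (q+1)*t) mod QQ = (k + (q+1)*(t mod (q-1)) + QQ*(t div (q-1))) mod QQ"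
        by (simp only: tt add.assoc)
      also have "\<dots> = (k + (q+1)*(t mod (q-1))) mod QQ" by (rule mod_mult_self2)
      finally have "(k + (q+1)*t) mod QQ = (k + (q+1)*(t mod (q-1))) mod QQ" .
      then have "x = f (t mod (q-1))" unfolding t f_def using w_pow_eq by simp
      moreover have "t mod (q-1) < q - 1" using q1 by simp
      ultimately show "x \<in> f ` {..<q-1}" by auto
    qed
  qed
  moreover have "inj_on f {..<q-1}"
  proof -
    have *: "a = b" if "a < q-1" "b < q-1" "a \<le> b" "f a = f b" for a b
    proof -
      have "(k + (q+1)*b) mod QQ = (k + (q+1)*a) mod QQ" using that(4) w_pow_eq unfolding f_def by simp
      moreover have "k + (q+1)*a \<le> k + (q+1)*b" by (intro add_left_mono mult_le_mono2 that(3))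
      ultimately have "QQ dvd (k + (q+1)*b) - (k + (q+1)*a)" using mod_eq_dvd_iff_nat by blast
      then have "(q+1)*(q-1) dvd (q+1)*(b - a)" unfolding QQ_eq by (simp add: diff_mult_distrib2)
      then have "(q-1) dvd (b - a)" using nat_mult_dvd_cancel1[of "q+1"] by simp
      moreover have "b - a < q - 1" using that by simp
      ultimately have "b - a = 0"
      proof (cases "b - a = 0")
        case False
        then have "q - 1 \<le> b - a" using \<open>(q-1) dvd (b - a)\<close> by (simp add: dvd_imp_le)
        then show ?thesis using \<open>b - a < q - 1\<close> by simp
      qed
      then show ?thesis using that(3) by simp
    qed
    show ?thesis
    proof (rule inj_onI)
      fix a b assume a: "a \<in> {..<q-1}" and b: "b \<in> {..<q-1}" and e: "f a = f b"
      show "a = b"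
      proof (cases "a \<le> b")
        case True then show ?thesis using * a b e by simp
      next
        case False then show ?thesis using *[of b a] a b e by simp
      qed
    qed
  qed
  ultimately show ?thesis by (simp add: card_image)
qed

lemma card_line: "card (line k) = q"
proof -
  have "card (line k) = card (cyc w (q+1) k) + 1" unfolding line_def
    using zero_notin_cyc by (simp add: card_insert_if)
  then show ?thesis using card_L qd by simp
qed

lemma decomp:
  assumes "j mod (q+1) \<noteq> k mod (q+1)" shows "\<exists>!x. x \<in> line j \<and> x - z \<in> line k"
proof -
  define S where "S = line j \<times> line k"
  define g where "g = (\<lambda>p. fst p - (snd p::'a))"
  have inj: "inj_on g S"
  proof (rule inj_onI)
    fix u v assume u: "u \<in> S" and v: "v \<in> S" and e: "g u = g v"
    have ab: "fst u \<in> line j" "snd u \<in> line k" "fst v \<in> line j" "snd v \<in> line k"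
      using u v unfolding S_def by (simp_all add: mem_Times_iff)
    have eq: "fst u - fst v = snd u - snd v" using e unfolding g_def by (simp add: algebra_simps)
    have l1: "fst u - fst v \<in> line j" by (rule line_diff[OF ab(1) ab(3)])
    have l2: "fst u - fst v \<in> line k" unfolding eq by (rule line_diff[OF ab(2) ab(4)])
    have "fst u - fst v = 0" by (rule line_inter[OF assms l1 l2])
    then have "fst u = fst v" "snd u = snd v" using eq by simp_all
    then show "u = v" by (simp add: prod_eq_iff)
  qed
  have "card S = q * q" unfolding S_def by (simp only: card_cartesian_product card_line)
  then have c: "card (g ` S) = card (UNIV :: 'a set)" using card_image[OF inj] cardF by (simp add: power2_eq_square)
  have "g ` S = UNIV" by (rule card_eq_UNIV_imp_eq_UNIV[OF _ c]) simp
  then have "z \<in> g ` S" by simp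
  then obtain u where u: "u \<in> S" "z = g u" by blast
  define a where "a = fst u"
  have ab: "a \<in> line j" "a - z \<in> line k"
    using u unfolding S_def g_def a_def by (simp_all add: mem_Times_iff)
  show ?thesis
  proof (rule ex1I[of _ a])
    show "a \<in> line j \<and> a - z \<in> line k" using ab by simp
    fix x assume x: "x \<in> line j \<and> x - z \<in> line k"
    have l1: "x - a \<in> line j" using x by (intro line_diff[OF _ ab(1)]) simp
    have "(x - z) - (a - z) \<in> line k" using x by (intro line_diff[OF _ ab(2)]) simp
    then have l2: "x - a \<in> line k" by simp
    have "x - a = 0" by (rule line_inter[OF assms l1 l2])
    then show "x = a" by simp
  qed
qed

end


context fsetup
begin

lemma line_nz: "x \<noteq> 0 \<Longrightarrow> x \<in> line k \<longleftrightarrow> x \<in> cyc w (q+1) k"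
  unfolding line_def by simp

lemma nu_ne:
  assumes jk: "j mod (q+1) \<noteq> k mod (q+1)"
  shows "NN (cyc w (q+1) j) (cyc w (q+1) k) z = (if z \<in> line j \<or> z \<in> line k then 0 else 1)"
proof -
  obtain a where a: "a \<in> line j" "a - z \<in> line k"
    and uniq: "\<And>x. x \<in> line j \<Longrightarrow> x - z \<in> line k \<Longrightarrow> x = a"
    using decomp[OF jk, of z] by blast
  have set: "{x \<in> cyc w (q+1) j. x - z \<in> cyc w (q+1) k} = (if a \<noteq> 0 \<and> a - z \<noteq> 0 then {a} else {})"
  proof (cases "a \<noteq> 0 \<and> a - z \<noteq> 0")
    case True
    have "{x \<in> cyc w (q+1) j. x - z \<in> cyc w (q+1) k} = {a}"
    proof
      show "{a} \<subseteq> {x \<in> cyc w (q+1) j. x - z \<in> cyc w (q+1) k}"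
        using a True line_nz by auto
      show "{x \<in> cyc w (q+1) j. x - z \<in> cyc w (q+1) k} \<subseteq> {a}"
        using uniq unfolding line_def by auto
    qed
    then show ?thesis by (subst if_P[OF True])
  next
    case False
    have "x = a" if "x \<in> cyc w (q+1) j" "x - z \<in> cyc w (q+1) k" for x
      using uniq that unfolding line_def by auto
    then have e: "{x \<in> cyc w (q+1) j. x - z \<in> cyc w (q+1) k} = {}"
      using False zero_notin_cyc by fastforce
    show ?thesis by (subst if_not_P[OF False]) (rule e)
  qed
  have iff: "(a = 0 \<or> a - z = 0) \<longleftrightarrow> (z \<in> line j \<or> z \<in> line k)"
  proof
    assume "a = 0 \<or> a - z = 0"
    then show "z \<in> line j \<or> z \<in> line k"
    proof
      assume "a = 0"
      then have "0 - (a - z) \<in> line k" using a line_diff zero_line by blast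
      then show ?thesis using \<open>a = 0\<close> by simp
    next
      assume "a - z = 0" then show ?thesis using a by simp
    qed
  next
    assume "z \<in> line j \<or> z \<in> line k"
    then show "a = 0 \<or> a - z = 0"
    proof
      assume "z \<in> line j"
      moreover have "z - z \<in> line k" using zero_line by simp
      ultimately have "z = a" using uniq by blast
      then show ?thesis by simp
    next
      assume zk: "z \<in> line k"
      have "0 - z \<in> line k" using line_diff[OF zero_line zk] .
      then have "0 = a" using uniq zero_line by simp
      then show ?thesis by simp
    qed
  qed
  show ?thesis unfolding NN_def set using iff by auto
qed

lemma NN_nz:
  "NN (UNIV - {0}) (cyc w (q+1) k) z = (q - 1) - (if z \<in> cyc w (q+1) k then 1 else 0)"
proof -
  have "{x \<in> UNIV - {0}. x - z \<in> cyc w (q+1) k} = (\<lambda>u. u + z) ` (cyc w (q+1) k - {-z})"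
  proof
    show "{x \<in> UNIV - {0}. x - z \<in> cyc w (q+1) k} \<subseteq> (\<lambda>u. u + z) ` (cyc w (q+1) k - {-z})"
    proof
      fix x assume "x \<in> {x \<in> UNIV - {0}. x - z \<in> cyc w (q+1) k}"
      then have "x - z \<in> cyc w (q+1) k - {-z}" "x = (x - z) + z" by auto
      then show "x \<in> (\<lambda>u. u + z) ` (cyc w (q+1) k - {-z})" by blast
    qed
    show "(\<lambda>u. u + z) ` (cyc w (q+1) k - {-z}) \<subseteq> {x \<in> UNIV - {0}. x - z \<in> cyc w (q+1) k}"
      by (auto simp: add_eq_0_iff)
  qed
  moreover have "inj_on (\<lambda>u. u + z) (cyc w (q+1) k - {-z})" by (rule inj_onI) simp
  ultimately have "NN (UNIV - {0}) (cyc w (q+1) k) z = card (cyc w (q+1) k - {-z})"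
    unfolding NN_def by (simp add: card_image)
  also have "\<dots> = card (cyc w (q+1) k) - (if -z \<in> cyc w (q+1) k then 1 else 0)"
    by (simp add: card_Diff_singleton_if)
  finally show ?thesis using card_L neg_L by simp
qed

lemma Q_UN: "cyc w 4 r = (\<Union>j\<in>{j. j < q+1 \<and> j mod 4 = r mod 4}. cyc w (q+1) j)"
proof
  show "cyc w 4 r \<subseteq> (\<Union>j\<in>{j. j < q+1 \<and> j mod 4 = r mod 4}. cyc w (q+1) j)"
  proof
    fix x assume x: "x \<in> cyc w 4 r"
    then have nz: "x \<noteq> 0" and r: "lg x mod 4 = r mod 4" using mem_cyc[OF dvd4] by auto
    define j where "j = lg x mod (q+1)"
    have "j mod 4 = lg x mod 4" unfolding j_def using dvd4q by (simp add: mod_mod_cancel)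
    moreover have "j < q + 1" unfolding j_def by simp
    moreover have "x \<in> cyc w (q+1) j" using mem_cyc[OF dvdq1] nz unfolding j_def by simp
    ultimately show "x \<in> (\<Union>j\<in>{j. j < q+1 \<and> j mod 4 = r mod 4}. cyc w (q+1) j)" using r by auto
  qed
  show "(\<Union>j\<in>{j. j < q+1 \<and> j mod 4 = r mod 4}. cyc w (q+1) j) \<subseteq> cyc w 4 r"
  proof
    fix x assume "x \<in> (\<Union>j\<in>{j. j < q+1 \<and> j mod 4 = r mod 4}. cyc w (q+1) j)"
    then obtain j where j: "j < q+1" "j mod 4 = r mod 4" "x \<in> cyc w (q+1) j" by auto
    then have nz: "x \<noteq> 0" and "lg x mod (q+1) = j" using mem_cyc[OF dvdq1] by auto
    then have "lg x mod (q+1) mod 4 = j mod 4" by simp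
    then have "lg x mod 4 = r mod 4" using dvd4q j by (simp add: mod_mod_cancel)
    then show "x \<in> cyc w 4 r" using mem_cyc[OF dvd4] nz by simp
  qed
qed

lemma card_Jr: assumes "r < 4" shows "card {j. j < q+1 \<and> j mod 4 = r} = 2*m+1"
proof -
  have "{j. j < q+1 \<and> j mod 4 = r} = (\<lambda>t. 4*t + r) ` {..<2*m+1}"
  proof
    show "{j. j < q+1 \<and> j mod 4 = r} \<subseteq> (\<lambda>t. 4*t + r) ` {..<2*m+1}"
    proof
      fix j assume j: "j \<in> {j. j < q+1 \<and> j mod 4 = r}"
      from j have jr: "j mod 4 = r" by simp
      have "j = 4*(j div 4) + r" using mult_div_mod_eq[of 4 j] jr by linarith
      moreover have "j div 4 < 2*m+1" using j qd by auto
      ultimately show "j \<in> (\<lambda>t. 4*t + r) ` {..<2*m+1}" by blast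
    qed
    show "(\<lambda>t. 4*t + r) ` {..<2*m+1} \<subseteq> {j. j < q+1 \<and> j mod 4 = r}"
      using assms qd by auto
  qed
  moreover have "inj_on (\<lambda>t. 4*t + r) {..<2*m+1}" by (rule inj_onI) simp
  ultimately show ?thesis by (simp add: card_image)
qed

lemma sum_ind_int:
  assumes "finite A"
  shows "(\<Sum>j\<in>A. if j = l then 0 else 1::int) = int (card A) - (if l \<in> A then 1 else 0)"
proof -
  have "(\<Sum>j\<in>A. if j = l then 0 else 1::int) = (\<Sum>j\<in>A. 1 - (if j = l then 1 else 0))"
    by (intro sum.cong) auto
  also have "\<dots> = int (card A) - (\<Sum>j\<in>A. if j = l then 1 else 0)"
    by (simp add: sum_subtractf)
  also have "(\<Sum>j\<in>A. if j = l then 1 else 0::int) = (if l \<in> A then 1 else 0)"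
    using assms by (simp add: sum.delta)
  finally show ?thesis .
qed

lemma Phi:
  assumes k: "k < q+1"
  shows "int (NN (cyc w 4 (k+2)) (cyc w (q+1) k) z) =
     (if z \<in> line k then 0 else 2*int m+1 - (if z \<in> cyc w 4 (k+2) then 1 else 0))"
proof -
  define R where "R = (k+2) mod 4"
  define Jr where "Jr = {j. j < q+1 \<and> j mod 4 = R}"
  have fin: "finite Jr" unfolding Jr_def by simp
  have cJ: "card Jr = 2*m+1" unfolding Jr_def R_def by (rule card_Jr) simp
  have jne: "j mod (q+1) \<noteq> k mod (q+1)" if "j \<in> Jr" for j
  proof -
    have "j mod 4 = (k+2) mod 4" using that unfolding Jr_def R_def by simp
    then have "j mod 4 \<noteq> k mod 4" using mod_ne2[of k] by simp
    then have "j \<noteq> k" by auto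
    then show ?thesis using that k unfolding Jr_def by simp
  qed
  have "NN (cyc w 4 (k+2)) (cyc w (q+1) k) z = NN (\<Union>j\<in>Jr. cyc w (q+1) j) (cyc w (q+1) k) z"
    using Q_UN[of "k+2"] unfolding Jr_def R_def by simp
  also have "\<dots> = (\<Sum>j\<in>Jr. NN (cyc w (q+1) j) (cyc w (q+1) k) z)"
  proof (rule NN_UN[OF fin])
    fix i j assume "i \<in> Jr" "j \<in> Jr" "i \<noteq> j"
    then have "i mod (q+1) \<noteq> j mod (q+1)" unfolding Jr_def by simp
    then show "cyc w (q+1) i \<inter> cyc w (q+1) j = {}" by (rule cyc_disj[OF dvdq1])
  qed
  also have "\<dots> = (\<Sum>j\<in>Jr. if z \<in> line j \<or> z \<in> line k then 0 else 1)"
    using jne nu_ne by (intro sum.cong) auto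
  finally have eq: "int (NN (cyc w 4 (k+2)) (cyc w (q+1) k) z) = (\<Sum>j\<in>Jr. if z \<in> line j \<or> z \<in> line k then 0 else 1::int)"
    by (simp add: of_nat_sum, intro sum.cong refl, simp)
  show ?thesis
  proof (cases "z \<in> line k")
    case True then show ?thesis using eq by simp
  next
    case False
    then have nz: "z \<noteq> 0" using zero_line by auto
    define l where "l = lg z mod (q+1)"
    have "(\<Sum>j\<in>Jr. if z \<in> line j \<or> z \<in> line k then 0 else 1::int) = (\<Sum>j\<in>Jr. if j = l then 0 else 1)"
    proof (intro sum.cong refl)
      fix j assume "j \<in> Jr"
      then have "j < q+1" unfolding Jr_def by simp
      then have "z \<in> line j \<longleftrightarrow> j = l" using line_nz[OF nz] mem_cyc[OF dvdq1] nz unfolding l_def by auto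
      then show "(if z \<in> line j \<or> z \<in> line k then 0 else 1::int) = (if j = l then 0 else 1)" using False by simp
    qed
    also have "\<dots> = int (card Jr) - (if l \<in> Jr then 1 else 0)" by (rule sum_ind_int[OF fin])
    also have "l \<in> Jr \<longleftrightarrow> z \<in> cyc w 4 (k+2)"
    proof -
      have "l \<in> Jr \<longleftrightarrow> l mod 4 = R" unfolding Jr_def l_def by simp
      also have "l mod 4 = lg z mod 4" unfolding l_def using dvd4q by (simp add: mod_mod_cancel)
      also have "lg z mod 4 = R \<longleftrightarrow> z \<in> cyc w 4 (k+2)" unfolding R_def using mem_cyc[OF dvd4] nz by simp
      finally show ?thesis .
    qed
    finally show ?thesis using eq False cJ by simp
  qed
qed

lemma pairD:
  "NN (cyc w 8 i) (cyc w (q+1) k) z + NN (cyc w (q+1) k) (cyc w 8 i) z = NN (cyc w 4 i) (cyc w (q+1) k) z"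
proof -
  have "{u \<in> cyc w 8 (i+4). u - z \<in> cyc w (q+1) k} = (\<lambda>x. z - x) ` {x \<in> cyc w (q+1) k. x - z \<in> cyc w 8 i}"
  proof
    show "{u \<in> cyc w 8 (i+4). u - z \<in> cyc w (q+1) k} \<subseteq> (\<lambda>x. z - x) ` {x \<in> cyc w (q+1) k. x - z \<in> cyc w 8 i}"
    proof
      fix u assume u: "u \<in> {u \<in> cyc w 8 (i+4). u - z \<in> cyc w (q+1) k}"
      have "z - u \<in> cyc w (q+1) k" using u neg_L[of "u - z" k] by simp
      moreover have "(z - u) - z \<in> cyc w 8 i" using u neg_D[of "-u" i] by simp
      moreover have "u = z - (z - u)" by simp
      ultimately show "u \<in> (\<lambda>x. z - x) ` {x \<in> cyc w (q+1) k. x - z \<in> cyc w 8 i}" by blast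
    qed
    show "(\<lambda>x. z - x) ` {x \<in> cyc w (q+1) k. x - z \<in> cyc w 8 i} \<subseteq> {u \<in> cyc w 8 (i+4). u - z \<in> cyc w (q+1) k}"
    proof
      fix u assume "u \<in> (\<lambda>x. z - x) ` {x \<in> cyc w (q+1) k. x - z \<in> cyc w 8 i}"
      then obtain x where x: "x \<in> cyc w (q+1) k" "x - z \<in> cyc w 8 i" "u = z - x" by blast
      have "u \<in> cyc w 8 (i+4)" using x neg_D[of "x - z" i] by simp
      moreover have "u - z \<in> cyc w (q+1) k" using x neg_L[of x k] by simp
      ultimately show "u \<in> {u \<in> cyc w 8 (i+4). u - z \<in> cyc w (q+1) k}" by blast
    qed
  qed
  moreover have "inj_on (\<lambda>x. z - x) A" for A by (rule inj_onI) simp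
  ultimately have e1: "NN (cyc w (q+1) k) (cyc w 8 i) z = NN (cyc w 8 (i+4)) (cyc w (q+1) k) z"
    unfolding NN_def by (simp add: card_image)
  have disj: "cyc w 8 i \<inter> cyc w 8 (i+4) = {}" by (rule cyc_disj[OF dvd8]) (rule mod8_4)
  have un1: "x \<in> cyc w 8 i \<union> cyc w 8 (i+4) \<longleftrightarrow> x \<in> cyc w 4 i" for x
    unfolding Un_iff mem_cyc[OF dvd8] mem_cyc[OF dvd4] using mod84[of "lg x" i] by blast
  have un: "cyc w 8 i \<union> cyc w 8 (i+4) = cyc w 4 i" using un1 by blast
  show ?thesis unfolding e1 NN_Un[OF disj, symmetric] un ..
qed

end


locale isetup = fsetup q m w
  for q m :: nat and w :: "'a::{finite,field}" +
  fixes I :: "nat set" and y :: nat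
  assumes I_sub: "I \<subseteq> {0..7}" and I_card: "card I = 3"
    and I_disj: "I \<inter> {(x + 4) mod 8 | x. x \<in> I} = {}"
    and y_I: "y \<in> I" and y_par: "\<forall>x\<in>I - {y}. odd x \<noteq> odd y"
begin

lemma finI: "finite I" using I_sub finite_subset by blast
lemma I_le7: "i \<in> I \<Longrightarrow> i \<le> 7" using I_sub by auto
lemma y_le7: "y \<le> 7" using I_le7 y_I .

lemma Ia: "i \<in> I \<Longrightarrow> i mod 4 \<noteq> (y+2) mod 4"
proof -
  assume i: "i \<in> I"
  have "i = y \<or> odd i \<noteq> odd y" using y_par i by blast
  then show ?thesis using Ifact_a[OF I_le7[OF i] y_le7] by blast
qed

lemma Ib: "i \<in> I \<Longrightarrow> j \<in> I \<Longrightarrow> i \<noteq> j \<Longrightarrow> i mod 4 \<noteq> j mod 4"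
proof
  assume i: "i \<in> I" and j: "j \<in> I" and ne: "i \<noteq> j" and e: "i mod 4 = j mod 4"
  have "j = (i+4) mod 8" using Ifact_b[OF I_le7[OF i] I_le7[OF j] ne e] .
  then have "j \<in> {(x + 4) mod 8 | x. x \<in> I}" using i by blast
  then show False using I_disj j by blast
qed

lemma Ic: assumes "r < 4" "r \<noteq> (y+2) mod 4" shows "\<exists>i\<in>I. i mod 4 = r"
proof -
  define f where "f i = i mod (4::nat)" for i
  have inj: "inj_on f I"
  proof (rule inj_onI)
    fix i j assume "i \<in> I" "j \<in> I" "f i = f j"
    then show "i = j" using Ib unfolding f_def by blast
  qed
  have sub: "f ` I \<subseteq> {0..<4} - {(y+2) mod 4}" unfolding f_def using Ia by auto
  have c1: "card (f ` I) = 3" using card_image[OF inj] I_card by simp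
  have c2: "card ({0..<4} - {(y+2) mod 4}) = 3" by (simp add: card_Diff_singleton_if)
  have "f ` I = {0..<4} - {(y+2) mod 4}" by (rule card_subset_eq) (use sub c1 c2 in auto)
  then have "r \<in> f ` I" using assms by auto
  then show ?thesis unfolding f_def by auto
qed

lemma UQ: "(\<Union>i\<in>I. cyc w 4 (i+s)) = UNIV - {0} - cyc w 4 (y+2+s)"
proof -
  have "x \<in> (\<Union>i\<in>I. cyc w 4 (i+s)) \<longleftrightarrow> x \<in> UNIV - {0} - cyc w 4 (y+2+s)" for x
  proof
    assume "x \<in> (\<Union>i\<in>I. cyc w 4 (i+s))"
    then obtain i where i: "i \<in> I" "x \<in> cyc w 4 (i+s)" by blast
    then have nz: "x \<noteq> 0" and e: "lg x mod 4 = (i+s) mod 4" using mem_cyc[OF dvd4] by auto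
    have "(i+s) mod 4 \<noteq> (y+2+s) mod 4" using Ia[OF i(1)] mod_add_rcancel4 by blast
    then show "x \<in> UNIV - {0} - cyc w 4 (y+2+s)" using nz e mem_cyc[OF dvd4] by auto
  next
    assume "x \<in> UNIV - {0} - cyc w 4 (y+2+s)"
    then have nz: "x \<noteq> 0" and ne: "lg x mod 4 \<noteq> (y+2+s) mod 4" using mem_cyc[OF dvd4] by auto
    define \<rho> where "\<rho> = (lg x mod 4 + 3*s) mod 4"
    have r1: "(\<rho> + s) mod 4 = lg x mod 4"
    proof -
      have "(\<rho> + s) mod 4 = (lg x mod 4 + 3*s + s) mod 4" unfolding \<rho>_def by (rule mod_add_left_eq)
      also have "lg x mod 4 + 3*s + s = lg x mod 4 + 4*s" by simp
      also have "(lg x mod 4 + 4*s) mod 4 = lg x mod 4" by simp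
      finally show ?thesis .
    qed
    have "\<rho> \<noteq> (y+2) mod 4"
    proof
      assume "\<rho> = (y+2) mod 4"
      then have "(\<rho> + s) mod 4 = (y + 2 + s) mod 4" by (simp add: mod_add_left_eq)
      then show False using r1 ne by simp
    qed
    then obtain i where i: "i \<in> I" "i mod 4 = \<rho>" using Ic[of \<rho>] unfolding \<rho>_def by auto
    have "(i + s) mod 4 = (i mod 4 + s) mod 4" by (rule mod_add_left_eq[symmetric])
    also have "\<dots> = (\<rho> + s) mod 4" using i(2) by simp
    finally have "(i + s) mod 4 = (\<rho> + s) mod 4" .
    then have "x \<in> cyc w 4 (i+s)" using r1 nz mem_cyc[OF dvd4] by simp
    then show "x \<in> (\<Union>i\<in>I. cyc w 4 (i+s))" using i(1) by blast
  qed
  then show ?thesis by blast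
qed

lemma Qdisj: "i \<in> I \<Longrightarrow> j \<in> I \<Longrightarrow> i \<noteq> j \<Longrightarrow> cyc w 4 (i+s) \<inter> cyc w 4 (j+s) = {}"
proof -
  assume i: "i \<in> I" and j: "j \<in> I" and ne: "i \<noteq> j"
  have "i mod 4 \<noteq> j mod 4" by (rule Ib[OF i j ne])
  then have "(i+s) mod 4 \<noteq> (j+s) mod 4" using mod_add_rcancel4 by blast
  then show ?thesis by (rule cyc_disj[OF dvd4])
qed

lemma Ddisj: "i \<in> I \<Longrightarrow> j \<in> I \<Longrightarrow> i \<noteq> j \<Longrightarrow> cyc w 8 (i+s) \<inter> cyc w 8 (j+s) = {}"
proof -
  assume i: "i \<in> I" and j: "j \<in> I" and ne: "i \<noteq> j"
  have "i mod 8 \<noteq> j mod 8" using I_le7[OF i] I_le7[OF j] ne by simp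
  then have "(i+s) mod 8 \<noteq> (j+s) mod 8" using mod_add_rcancel4 by blast
  then show ?thesis by (rule cyc_disj[OF dvd8])
qed

definition Gv :: "'a \<Rightarrow> nat \<Rightarrow> int" where
  "Gv z k = (if z = 0 then 8*int m+2 else if z \<in> cyc w (q+1) k then 8*int m+1
     else 6*int m+1 + (if z \<in> cyc w 4 (k+2) then 1 else 0))"

lemma Gsum:
  assumes k: "k < q+1" and ks: "k mod 4 = (y+s) mod 4"
  shows "int (\<Sum>i\<in>I. NN (cyc w 4 (i+s)) (cyc w (q+1) k) z) = Gv z k"
proof -
  define Q' where "Q' = cyc w 4 (k+2)"
  have Q'eq: "cyc w 4 (y+2+s) = Q'" unfolding Q'_def
  proof (rule cyc_eq[OF dvd4])
    have "(y+s+2) mod 4 = (k+2) mod 4" using mod_add_rcancel4[of "y+s" 2 4 k] ks by simp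
    then show "(y+2+s) mod 4 = (k+2) mod 4" by (simp add: add.commute add.left_commute)
  qed
  have "(\<Sum>i\<in>I. NN (cyc w 4 (i+s)) (cyc w (q+1) k) z) = NN (\<Union>i\<in>I. cyc w 4 (i+s)) (cyc w (q+1) k) z"
    by (rule NN_UN[symmetric, OF finI]) (rule Qdisj)
  also have "\<dots> = NN (UNIV - {0} - Q') (cyc w (q+1) k) z" unfolding UQ Q'eq ..
  finally have s1: "(\<Sum>i\<in>I. NN (cyc w 4 (i+s)) (cyc w (q+1) k) z) = NN (UNIV - {0} - Q') (cyc w (q+1) k) z" .
  have ueq: "UNIV - {0} = (UNIV - {0} - Q') \<union> Q'" unfolding Q'_def using zero_notin_cyc by blast
  have d: "(UNIV - {0} - Q') \<inter> Q' = {}" by blast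
  have "NN (UNIV - {0}) (cyc w (q+1) k) z = NN ((UNIV - {0} - Q') \<union> Q') (cyc w (q+1) k) z"
    by (subst ueq) (rule refl)
  also have "\<dots> = NN (UNIV - {0} - Q') (cyc w (q+1) k) z + NN Q' (cyc w (q+1) k) z"
    by (rule NN_Un[OF d])
  finally have "NN (UNIV - {0}) (cyc w (q+1) k) z = NN (UNIV - {0} - Q') (cyc w (q+1) k) z + NN Q' (cyc w (q+1) k) z" .
  then have s2: "int (\<Sum>i\<in>I. NN (cyc w 4 (i+s)) (cyc w (q+1) k) z) =
      int (NN (UNIV - {0}) (cyc w (q+1) k) z) - int (NN Q' (cyc w (q+1) k) z)" using s1 by simp
  have nzv: "int (NN (UNIV - {0}) (cyc w (q+1) k) z) = int q - 1 - (if z \<in> cyc w (q+1) k then 1 else 0)"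
    using NN_nz[of k z] qd by simp
  have ph: "int (NN Q' (cyc w (q+1) k) z) =
     (if z \<in> line k then 0 else 2*int m+1 - (if z \<in> Q' then 1 else 0))" unfolding Q'_def by (rule Phi[OF k])
  have iq: "int q = 8 * int m + 3" using qd by simp
  show ?thesis
  proof (cases "z = 0")
    case True
    have a: "int (NN Q' (cyc w (q+1) k) z) = 0" using ph zero_line True by simp
    have b: "int (NN (UNIV - {0}) (cyc w (q+1) k) z) = int q - 1" using nzv True zero_notin_cyc by simp
    have c: "Gv z k = 8*int m + 2" unfolding Gv_def using True by simp
    show ?thesis unfolding c using s2 a b iq by linarith
  next
    case False
    show ?thesis
    proof (cases "z \<in> cyc w (q+1) k")
      case True
      have zl: "z \<in> line k" using True line_nz[OF False] by simp
      have a: "int (NN Q' (cyc w (q+1) k) z) = 0" using ph zl by simp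
      have b: "int (NN (UNIV - {0}) (cyc w (q+1) k) z) = int q - 2" using nzv True by simp
      have c: "Gv z k = 8*int m + 1" unfolding Gv_def using True False by simp
      show ?thesis unfolding c using s2 a b iq by linarith
    next
      case nL: False
      have zl: "z \<notin> line k" using nL line_nz[OF False] by simp
      define \<psi> where "\<psi> = (if z \<in> Q' then 1 else 0::int)"
      have a: "int (NN Q' (cyc w (q+1) k) z) = 2*int m+1 - \<psi>" using ph zl unfolding \<psi>_def by simp
      have b: "int (NN (UNIV - {0}) (cyc w (q+1) k) z) = int q - 1" using nzv nL by simp
      have c: "Gv z k = 6*int m + 1 + \<psi>" unfolding Gv_def \<psi>_def Q'_def using nL False by simp
      show ?thesis unfolding c using s2 a b iq by linarith
    qed
  qed
qed

end


lemma NN_split4: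
  assumes "X1 \<inter> X2 = {}" "Y1 \<inter> Y2 = {}"
  shows "NN (X1 \<union> X2) (Y1 \<union> Y2) z = NN X1 Y1 z + NN X1 Y2 z + NN X2 Y1 z + NN X2 Y2 z"
  using NN_Un[OF assms(1)] NN_Un2[OF assms(2)] by simp

context isetup
begin

definition AA :: "nat \<Rightarrow> 'a set" where "AA s = (\<Union>i\<in>I. cyc w 8 (i+s))"
definition BB :: "nat \<Rightarrow> 'a set" where "BB c = (\<Union>t\<in>{..<m}. cyc w (q+1) (y+c+4*t))"
definition Ph :: "'a \<Rightarrow> nat \<Rightarrow> int" where "Ph z c = (\<Sum>t<m. if z \<in> cyc w (q+1) (y+c+4*t) then 1 else 0)"
definition Ps :: "'a \<Rightarrow> nat \<Rightarrow> int" where "Ps z c = (if z \<in> cyc w 4 (y+c+2) then 1 else 0)"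

lemma idx_lt: "c < 4 \<Longrightarrow> t < m \<Longrightarrow> y+c+4*t < q+1"
  using y_le7 qd mpos by linarith

lemma Bdisj: "c < 4 \<Longrightarrow> t \<in> {..<m} \<Longrightarrow> t' \<in> {..<m} \<Longrightarrow> t \<noteq> t' \<Longrightarrow>
   cyc w (q+1) (y+c+4*t) \<inter> cyc w (q+1) (y+c+4*t') = {}"
proof -
  assume c: "c < 4" and t: "t \<in> {..<m}" and t': "t' \<in> {..<m}" and ne: "t \<noteq> t'"
  have "(y+c+4*t) mod (q+1) = y+c+4*t" using idx_lt[OF c] t by simp
  moreover have "(y+c+4*t') mod (q+1) = y+c+4*t'" using idx_lt[OF c] t' by simp
  ultimately have "(y+c+4*t) mod (q+1) \<noteq> (y+c+4*t') mod (q+1)" using ne by simp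
  then show ?thesis by (rule cyc_disj[OF dvdq1])
qed

lemma Ddisj': "i \<in> I \<Longrightarrow> j \<in> I \<Longrightarrow> i \<noteq> j \<Longrightarrow> cyc w 8 (i+s) \<inter> cyc w 8 (j+s) = {}"
  by (rule Ddisj)

lemma lg_mod4_L: "x \<in> cyc w (q+1) k \<Longrightarrow> lg x mod 4 = k mod 4"
proof -
  assume "x \<in> cyc w (q+1) k"
  then have "lg x mod (q+1) = k mod (q+1)" using mem_cyc[OF dvdq1] by simp
  then have "lg x mod (q+1) mod 4 = k mod (q+1) mod 4" by simp
  then show ?thesis using dvd4q by (simp add: mod_mod_cancel)
qed

lemma lg_mod4_D: "x \<in> cyc w 8 k \<Longrightarrow> lg x mod 4 = k mod 4"
proof -
  assume "x \<in> cyc w 8 k"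
  then have "lg x mod 8 = k mod 8" using mem_cyc[OF dvd8] by simp
  then have "lg x mod 8 mod 4 = k mod 8 mod 4" by simp
  then show ?thesis by (simp add: mod_mod_cancel)
qed

lemma ABdisj:
  assumes hc: "(s + 2) mod 4 = c mod 4"
  shows "AA s \<inter> BB c = {}"
proof -
  have False if x1: "x \<in> cyc w 8 (i+s)" and i: "i \<in> I" and x2: "x \<in> cyc w (q+1) (y+c+4*t)" for x i t
  proof -
    have e1: "lg x mod 4 = (i+s) mod 4" using lg_mod4_D[OF x1] .
    have "lg x mod 4 = (y+c+4*t) mod 4" using lg_mod4_L[OF x2] .
    also have "(y+c+4*t) mod 4 = (y+c) mod 4" by simp
    also have "(y+c) mod 4 = (y + c mod 4) mod 4" by (rule mod_add_right_eq[symmetric])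
    also have "\<dots> = (y + (s+2) mod 4) mod 4" using hc by simp
    also have "\<dots> = (y + (s+2)) mod 4" by (rule mod_add_right_eq)
    also have "y + (s+2) = y + 2 + s" by simp
    finally have e2: "lg x mod 4 = (y+2+s) mod 4" .
    have "(i+s) mod 4 \<noteq> (y+2+s) mod 4" using Ia[OF i] mod_add_rcancel4[of i s 4 "y+2"] by simp
    then show False using e1 e2 by simp
  qed
  then show ?thesis unfolding AA_def BB_def by blast
qed

lemma ABpair:
  assumes c: "c < 4"
  shows "int (NN (AA c) (BB c) z + NN (BB c) (AA c) z) = (\<Sum>t<m. Gv z (y+c+4*t))"
proof -
  have "NN (AA c) (BB c) z = (\<Sum>i\<in>I. NN (cyc w 8 (i+c)) (BB c) z)"
    unfolding AA_def by (rule NN_UN[OF finI]) (rule Ddisj)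
  also have "\<dots> = (\<Sum>i\<in>I. \<Sum>t<m. NN (cyc w 8 (i+c)) (cyc w (q+1) (y+c+4*t)) z)"
    unfolding BB_def by (intro sum.cong refl) (rule NN_UN2[OF finite_lessThan Bdisj[OF c]])
  finally have a1: "NN (AA c) (BB c) z = (\<Sum>t<m. \<Sum>i\<in>I. NN (cyc w 8 (i+c)) (cyc w (q+1) (y+c+4*t)) z)"
    by (simp add: sum.swap[of _ I])
  have "NN (BB c) (AA c) z = (\<Sum>t<m. NN (cyc w (q+1) (y+c+4*t)) (AA c) z)"
    unfolding BB_def by (rule NN_UN[OF finite_lessThan Bdisj[OF c]])
  also have "\<dots> = (\<Sum>t<m. \<Sum>i\<in>I. NN (cyc w (q+1) (y+c+4*t)) (cyc w 8 (i+c)) z)"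
    unfolding AA_def by (intro sum.cong refl NN_UN2[OF finI]) (rule Ddisj)
  finally have a2: "NN (BB c) (AA c) z = \<dots>" .
  have "NN (AA c) (BB c) z + NN (BB c) (AA c) z =
      (\<Sum>t<m. \<Sum>i\<in>I. NN (cyc w 8 (i+c)) (cyc w (q+1) (y+c+4*t)) z + NN (cyc w (q+1) (y+c+4*t)) (cyc w 8 (i+c)) z)"
    unfolding a1 a2 by (simp add: sum.distrib)
  also have "\<dots> = (\<Sum>t<m. \<Sum>i\<in>I. NN (cyc w 4 (i+c)) (cyc w (q+1) (y+c+4*t)) z)"
    by (intro sum.cong refl) (rule pairD)
  finally have "int (NN (AA c) (BB c) z + NN (BB c) (AA c) z) = (\<Sum>t<m. int (\<Sum>i\<in>I. NN (cyc w 4 (i+c)) (cyc w (q+1) (y+c+4*t)) z))"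
    by (simp add: of_nat_sum)
  also have "\<dots> = (\<Sum>t<m. Gv z (y+c+4*t))"
  proof (intro sum.cong refl)
    fix t assume "t \<in> {..<m}"
    then have kl: "y+c+4*t < q+1" using idx_lt[OF c] by simp
    have "(y+c+4*t) mod 4 = (y+c) mod 4" by simp
    then show "int (\<Sum>i\<in>I. NN (cyc w 4 (i+c)) (cyc w (q+1) (y+c+4*t)) z) = Gv z (y+c+4*t)"
      by (rule Gsum[OF kl])
  qed
  finally show ?thesis .
qed

lemma nu_val:
  assumes jk: "j mod (q+1) \<noteq> k mod (q+1)"
  shows "int (NN (cyc w (q+1) j) (cyc w (q+1) k) z) =
    (if z = 0 then 0 else 1 - (if z \<in> cyc w (q+1) j then 1 else 0) - (if z \<in> cyc w (q+1) k then 1 else 0))"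
proof (cases "z = 0")
  case True
  then show ?thesis using nu_ne[OF jk, of z] zero_line by simp
next
  case False
  have nb: "\<not> (z \<in> cyc w (q+1) j \<and> z \<in> cyc w (q+1) k)" using cyc_disj[OF dvdq1 jk] by blast
  show ?thesis using nu_ne[OF jk, of z] line_nz[OF False, of j] line_nz[OF False, of k] nb False by auto
qed

lemma BBval:
  assumes c: "c < 4" and c': "c' < 4" and ne: "c \<noteq> c'"
  shows "int (NN (BB c) (BB c') z) = (if z = 0 then 0 else int m * int m - int m * Ph z c - int m * Ph z c')"
proof -
  have "NN (BB c) (BB c') z = (\<Sum>t<m. NN (cyc w (q+1) (y+c+4*t)) (BB c') z)"
    unfolding BB_def by (rule NN_UN[OF finite_lessThan Bdisj[OF c]])
  also have "\<dots> = (\<Sum>t<m. \<Sum>t'<m. NN (cyc w (q+1) (y+c+4*t)) (cyc w (q+1) (y+c'+4*t')) z)"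
    unfolding BB_def by (intro sum.cong refl) (rule NN_UN2[OF finite_lessThan Bdisj[OF c']])
  finally have "int (NN (BB c) (BB c') z) = (\<Sum>t<m. \<Sum>t'<m. int (NN (cyc w (q+1) (y+c+4*t)) (cyc w (q+1) (y+c'+4*t')) z))"
    by (simp add: of_nat_sum)
  also have "\<dots> = (\<Sum>t<m. \<Sum>t'<m. (if z = 0 then 0 else 1 - (if z \<in> cyc w (q+1) (y+c+4*t) then 1 else 0)
        - (if z \<in> cyc w (q+1) (y+c'+4*t') then 1 else 0)))"
  proof (intro sum.cong refl)
    fix t t' assume t: "t \<in> {..<m}" and t': "t' \<in> {..<m}"
    have m1: "(y+c+4*t) mod (q+1) = y+c+4*t" using idx_lt[OF c] t by simp
    have m2: "(y+c'+4*t') mod (q+1) = y+c'+4*t'" using idx_lt[OF c'] t' by simp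
    have "(y+c+4*t) mod 4 = (c + y) mod 4" by (simp add: add.commute)
    moreover have "(y+c'+4*t') mod 4 = (c' + y) mod 4" by (simp add: add.commute)
    moreover have "(c + y) mod 4 \<noteq> (c' + y) mod 4" using mod_add_rcancel4[of c y 4 c'] c c' ne by simp
    ultimately have "y+c+4*t \<noteq> y+c'+4*t'" by metis
    then have "(y+c+4*t) mod (q+1) \<noteq> (y+c'+4*t') mod (q+1)" using m1 m2 by simp
    then show "int (NN (cyc w (q+1) (y+c+4*t)) (cyc w (q+1) (y+c'+4*t')) z) = (if z = 0 then 0 else 1 - (if z \<in> cyc w (q+1) (y+c+4*t) then 1 else 0)
        - (if z \<in> cyc w (q+1) (y+c'+4*t') then 1 else 0))" by (rule nu_val)
  qed
  finally have e: "int (NN (BB c) (BB c') z) = \<dots>" .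
  show ?thesis
  proof (cases "z = 0")
    case True then show ?thesis using e by simp
  next
    case False
    then show ?thesis using e sum_sq_int[where n=m and a="\<lambda>t. if z \<in> cyc w (q+1) (y+c+4*t) then 1 else 0"
        and b="\<lambda>t. if z \<in> cyc w (q+1) (y+c'+4*t) then 1 else 0"] unfolding Ph_def by simp
  qed
qed

lemma SGval:
  assumes c: "c < 4"
  shows "(\<Sum>t<m. Gv z (y+c+4*t)) =
    (if z = 0 then int m * (8 * int m + 2) else int m * (6 * int m + 1) + int m * Ps z c + 2 * int m * Ph z c)"
proof (cases "z = 0")
  case True then show ?thesis unfolding Gv_def by simp
next
  case False
  have "Gv z (y+c+4*t) = 6 * int m + 1 + Ps z c + 2 * int m * (if z \<in> cyc w (q+1) (y+c+4*t) then 1 else 0)" for t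
  proof -
    have e: "y+c+4*t+2 = (y+c+2) + 4*t" by simp
    have qeq: "cyc w 4 (y+c+4*t+2) = cyc w 4 (y+c+2)" by (rule cyc_eq[OF dvd4]) (unfold e, rule mod_mult_self2)
    show ?thesis
    proof (cases "z \<in> cyc w (q+1) (y+c+4*t)")
      case True
      have "lg z mod 4 = (y+c+4*t) mod 4" by (rule lg_mod4_L[OF True])
      then have l: "lg z mod 4 = (y+c) mod 4" by simp
      have "z \<notin> cyc w 4 (y+c+2)"
      proof
        assume "z \<in> cyc w 4 (y+c+2)"
        then have "lg z mod 4 = (y+c+2) mod 4" using mem_cyc[OF dvd4] by simp
        then show False using l mod_ne2[of "y+c"] by simp
      qed
      then show ?thesis using True False unfolding Gv_def Ps_def by simp
    next
      case nT: False
      then show ?thesis using False qeq unfolding Gv_def Ps_def by simp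
    qed
  qed
  then have "(\<Sum>t<m. Gv z (y+c+4*t)) = (\<Sum>t<m. 6 * int m + 1 + Ps z c + 2 * int m * (if z \<in> cyc w (q+1) (y+c+4*t) then 1 else 0))"
    by simp
  also have "\<dots> = int m * (6 * int m + 1 + Ps z c) + 2 * int m * Ph z c"
    unfolding Ph_def by (simp add: sum.distrib sum_distrib_left)
  finally show ?thesis using False by (simp add: algebra_simps)
qed

lemma Ps_sum:
  assumes "z \<noteq> 0"
  shows "Ps z 0 + Ps z 1 + Ps z 2 + Ps z 3 = 1"
proof -
  define u where "u = y mod 4"
  define l where "l = lg z mod 4"
  have P: "Ps z c = (if l = (u + c + 2) mod 4 then 1 else 0)" for c
  proof -
    have "(y + c + 2) mod 4 = (u + c + 2) mod 4" unfolding u_def add.assoc by (rule mod_add_left_eq[symmetric])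
    then show ?thesis unfolding Ps_def l_def using mem_cyc[OF dvd4] assms by simp
  qed
  show ?thesis unfolding P using psi4[of u l] unfolding u_def l_def by simp
qed

end


context isetup
begin

lemma aa_sum: "(\<Sum>i\<in>I. \<Sum>j\<in>I. int (NN (cyc w 8 (i+s)) (cyc w 8 (j+s')) z)) = int (NN (AA s) (AA s') z)"
proof -
  have "NN (AA s) (AA s') z = (\<Sum>i\<in>I. NN (cyc w 8 (i+s)) (AA s') z)"
    unfolding AA_def by (rule NN_UN[OF finI]) (rule Ddisj)
  also have "\<dots> = (\<Sum>i\<in>I. \<Sum>j\<in>I. NN (cyc w 8 (i+s)) (cyc w 8 (j+s')) z)"
    unfolding AA_def by (intro sum.cong refl) (rule NN_UN2[OF finI], rule Ddisj)
  finally show ?thesis by (simp add: of_nat_sum)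
qed

lemma Rh: "(\<Sum>i\<in>I. \<Sum>j\<in>I.
          gr_mult (gr_set (cyc w 8 (i + h))) (gr_inv (gr_set (cyc w 8 (j + 2 + h)))) z
        + gr_mult (gr_set (cyc w 8 (i + 2 + h))) (gr_inv (gr_set (cyc w 8 (j + h)))) z)
   = int (NN (AA h) (AA (2+h)) z) + int (NN (AA (2+h)) (AA h) z)"
proof -
  have "(\<Sum>i\<in>I. \<Sum>j\<in>I.
          gr_mult (gr_set (cyc w 8 (i + h))) (gr_inv (gr_set (cyc w 8 (j + 2 + h)))) z
        + gr_mult (gr_set (cyc w 8 (i + 2 + h))) (gr_inv (gr_set (cyc w 8 (j + h)))) z)
     = (\<Sum>i\<in>I. \<Sum>j\<in>I. int (NN (cyc w 8 (i+h)) (cyc w 8 (j+(2+h))) z))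
     + (\<Sum>i\<in>I. \<Sum>j\<in>I. int (NN (cyc w 8 (i+(2+h))) (cyc w 8 (j+h)) z))"
    unfolding gr_NN add.assoc by (simp only: sum.distrib)
  then show ?thesis unfolding aa_sum by simp
qed

lemma main_id:
  assumes E0: "E0 = AA 0 \<union> BB 2" and E1: "E1 = AA 2 \<union> BB 0"
    and E2: "E2 = AA 1 \<union> BB 3" and E3: "E3 = AA 3 \<union> BB 1"
  shows "gr_mult (gr_set E0) (gr_inv (gr_set E1)) z + gr_mult (gr_set E1) (gr_inv (gr_set E0)) z
    + gr_mult (gr_set E2) (gr_inv (gr_set E3)) z + gr_mult (gr_set E3) (gr_inv (gr_set E2)) z
    = (\<Sum>h\<in>{0::nat, 1}. \<Sum>i\<in>I. \<Sum>j\<in>I.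
          gr_mult (gr_set (cyc w 8 (i + h))) (gr_inv (gr_set (cyc w 8 (j + 2 + h)))) z
        + gr_mult (gr_set (cyc w 8 (i + 2 + h))) (gr_inv (gr_set (cyc w 8 (j + h)))) z)
      + 8 * int m * (4 * int m + 1) * gr_set {0} z
      + int m * (28 * int m + 5) * gr_set (UNIV - {0}) z"
proof -
  have d02: "AA 0 \<inter> BB 2 = {}" by (rule ABdisj) simp
  have d20: "AA 2 \<inter> BB 0 = {}" by (rule ABdisj) simp
  have d13: "AA 1 \<inter> BB 3 = {}" by (rule ABdisj) simp
  have d31: "AA 3 \<inter> BB 1 = {}" by (rule ABdisj) simp
  have n01: "NN E0 E1 z = NN (AA 0) (AA 2) z + NN (AA 0) (BB 0) z + NN (BB 2) (AA 2) z + NN (BB 2) (BB 0) z"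
    unfolding E0 E1 by (rule NN_split4[OF d02 d20])
  have n10: "NN E1 E0 z = NN (AA 2) (AA 0) z + NN (AA 2) (BB 2) z + NN (BB 0) (AA 0) z + NN (BB 0) (BB 2) z"
    unfolding E0 E1 by (rule NN_split4[OF d20 d02])
  have n23: "NN E2 E3 z = NN (AA 1) (AA 3) z + NN (AA 1) (BB 1) z + NN (BB 3) (AA 3) z + NN (BB 3) (BB 1) z"
    unfolding E2 E3 by (rule NN_split4[OF d13 d31])
  have n32: "NN E3 E2 z = NN (AA 3) (AA 1) z + NN (AA 3) (BB 3) z + NN (BB 1) (AA 1) z + NN (BB 1) (BB 3) z"
    unfolding E2 E3 by (rule NN_split4[OF d31 d13])
  have hs: "(\<Sum>h\<in>{0::nat, 1}. f h) = f 0 + f 1" for f :: "nat \<Rightarrow> int" by simp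
  have R: "(\<Sum>h\<in>{0::nat, 1}. \<Sum>i\<in>I. \<Sum>j\<in>I.
          gr_mult (gr_set (cyc w 8 (i + h))) (gr_inv (gr_set (cyc w 8 (j + 2 + h)))) z
        + gr_mult (gr_set (cyc w 8 (i + 2 + h))) (gr_inv (gr_set (cyc w 8 (j + h)))) z)
      = int (NN (AA 0) (AA 2) z) + int (NN (AA 2) (AA 0) z) + (int (NN (AA 1) (AA 3) z) + int (NN (AA 3) (AA 1) z))"
  proof -
    have e: "(2::nat) + 0 = 2" "(2::nat) + 1 = 3" by simp_all
    show ?thesis unfolding hs Rh e ..
  qed
  define P where "P c = int (NN (AA c) (BB c) z + NN (BB c) (AA c) z)" for c
  define S where "S c = (if z = 0 then int m * (8 * int m + 2) else int m * (6 * int m + 1) + int m * Ps z c + 2 * int m * Ph z c)" for c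
  have PS: "P c = S c" if "c < 4" for c unfolding P_def S_def using ABpair[OF that] SGval[OF that] by simp
  define B where "B c c' = (if z = 0 then 0 else int m * int m - int m * Ph z c - int m * Ph z c')" for c c'
  have b20: "int (NN (BB 2) (BB 0) z) = B 2 0" unfolding B_def by (rule BBval) simp_all
  have b02: "int (NN (BB 0) (BB 2) z) = B 0 2" unfolding B_def by (rule BBval) simp_all
  have b31: "int (NN (BB 3) (BB 1) z) = B 3 1" unfolding B_def by (rule BBval) simp_all
  have b13: "int (NN (BB 1) (BB 3) z) = B 1 3" unfolding B_def by (rule BBval) simp_all
  have L: "gr_mult (gr_set E0) (gr_inv (gr_set E1)) z + gr_mult (gr_set E1) (gr_inv (gr_set E0)) z
    + gr_mult (gr_set E2) (gr_inv (gr_set E3)) z + gr_mult (gr_set E3) (gr_inv (gr_set E2)) z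
    = int (NN (AA 0) (AA 2) z) + int (NN (AA 2) (AA 0) z) + (int (NN (AA 1) (AA 3) z) + int (NN (AA 3) (AA 1) z))
      + (P 0 + P 2 + P 1 + P 3) + (B 2 0 + B 0 2 + B 3 1 + B 1 3)"
    unfolding gr_NN n01 n10 n23 n32 P_def b20[symmetric] b02[symmetric] b31[symmetric] b13[symmetric]
    by simp
  have Pv: "P 0 + P 2 + P 1 + P 3 = S 0 + S 2 + S 1 + S 3" using PS[of 0] PS[of 1] PS[of 2] PS[of 3] by simp
  show ?thesis
  proof (cases "z = 0")
    case True
    have g1: "gr_set {0} z = 1" "gr_set (UNIV - {0}) z = 0" unfolding gr_set_def using True by simp_all
    have "S 0 + S 2 + S 1 + S 3 = 8 * int m * (4 * int m + 1)" unfolding S_def using True by (simp add: algebra_simps)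
    moreover have "B 2 0 + B 0 2 + B 3 1 + B 1 3 = 0" unfolding B_def using True by simp
    ultimately show ?thesis unfolding L R g1 Pv by simp
  next
    case False
    have g1: "gr_set {0} z = 0" "gr_set (UNIV - {0}) z = 1" unfolding gr_set_def using False by simp_all
    have ps: "Ps z 0 + Ps z 1 + Ps z 2 + Ps z 3 = 1" by (rule Ps_sum[OF False])
    then have "int m * Ps z 0 + int m * Ps z 1 + int m * Ps z 2 + int m * Ps z 3 = int m"
      by (metis distrib_left mult.right_neutral)
    then have "(S 0 + S 2 + S 1 + S 3) + (B 2 0 + B 0 2 + B 3 1 + B 1 3) = int m * (28 * int m + 5)"
      unfolding S_def B_def using False by (simp add: algebra_simps)
    then show ?thesis unfolding L R g1 Pv by simp
  qed
qed

end


lemma setcomp_image: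
  assumes "\<And>t. t < m \<Longrightarrow> g t = f t" shows "{g t | t. t < (m::nat)} = f ` {..<m}"
proof
  show "{g t | t. t < m} \<subseteq> f ` {..<m}" using assms by auto
  show "f ` {..<m} \<subseteq> {g t | t. t < m}"
  proof
    fix x assume "x \<in> f ` {..<m}"
    then obtain t where t: "t < m" "x = f t" by auto
    then have "x = g t" using assms[of t] by simp
    then show "x \<in> {g t | t. t < m}" using t(1) by blast
  qed
qed

theorem lemma3p3:
  fixes q m y :: nat and I :: "nat set" and \<omega> :: "'a::{finite,field}"
    and E0 E1 E2 E3 :: "'a set"
  assumes q_pp: "\<exists>p k. prime p \<and> k \<ge> 1 \<and> q = p ^ k"
    and q_def: "q = 8 * m + 3" and m_pos: "m \<ge> 1"
    and card_F: "card (UNIV :: 'a set) = q ^ 2"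
    and prim: "primitive_elem \<omega>"
    and I_sub: "I \<subseteq> {0..7}" and I_card: "card I = 3"
    and I_disj: "I \<inter> {(x + 4) mod 8 | x. x \<in> I} = {}"
    and y_I: "y \<in> I" and y_par: "\<forall>x\<in>I - {y}. odd x \<noteq> odd y"
    and E0_def: "E0 = (\<Union>i\<in>I. cyc \<omega> 8 i) \<union>
        (\<Union>i\<in>{(y + 2 + 4 * t) mod (q + 1) | t. t < m}. cyc \<omega> (q + 1) i)"
    and E1_def: "E1 = (\<Union>i\<in>I. cyc \<omega> 8 (i + 2)) \<union>
        (\<Union>i\<in>{(y + 4 * t) mod (q + 1) | t. t < m}. cyc \<omega> (q + 1) i)"
    and E2_def: "E2 = (\<Union>i\<in>I. cyc \<omega> 8 (i + 1)) \<union>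
        (\<Union>i\<in>{(y + 2 + 4 * t) mod (q + 1) | t. t < m}. cyc \<omega> (q + 1) (i + 1))"
    and E3_def: "E3 = (\<Union>i\<in>I. cyc \<omega> 8 (i + 3)) \<union>
        (\<Union>i\<in>{(y + 4 * t) mod (q + 1) | t. t < m}. cyc \<omega> (q + 1) (i + 1))"
  shows "\<forall>z::'a.
      gr_mult (gr_set E0) (gr_inv (gr_set E1)) z + gr_mult (gr_set E1) (gr_inv (gr_set E0)) z
    + gr_mult (gr_set E2) (gr_inv (gr_set E3)) z + gr_mult (gr_set E3) (gr_inv (gr_set E2)) z
    = (\<Sum>h\<in>{0::nat, 1}. \<Sum>i\<in>I. \<Sum>j\<in>I.
          gr_mult (gr_set (cyc \<omega> 8 (i + h))) (gr_inv (gr_set (cyc \<omega> 8 (j + 2 + h)))) z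
        + gr_mult (gr_set (cyc \<omega> 8 (i + 2 + h))) (gr_inv (gr_set (cyc \<omega> 8 (j + h)))) z)
      + 8 * int m * (4 * int m + 1) * gr_set {0} z
      + int m * (28 * int m + 5) * gr_set (UNIV - {0}) z"
proof -
  interpret isetup q m \<omega> I y
    by unfold_locales (fact q_pp q_def m_pos card_F prim I_sub I_card I_disj y_I y_par)+
  have J1: "{(y + 2 + 4 * t) mod (q + 1) | t. t < m} = (\<lambda>t. y + 2 + 4 * t) ` {..<m}"
    by (rule setcomp_image) (use idx_lt[of 2] in simp)
  have J2: "{(y + 4 * t) mod (q + 1) | t. t < m} = (\<lambda>t. y + 4 * t) ` {..<m}"
    by (rule setcomp_image) (use idx_lt[of 0] in simp)
  have e0: "E0 = AA 0 \<union> BB 2" unfolding E0_def J1 AA_def BB_def by simp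
  have e1: "E1 = AA 2 \<union> BB 0" unfolding E1_def J2 AA_def BB_def by simp
  have k3: "\<And>t. y + 2 + 4 * t + 1 = y + 3 + 4 * t" by linarith
  have k1: "\<And>t. y + 4 * t + 1 = y + 1 + 4 * t" by linarith
  have u2: "(\<Union>i\<in>(\<lambda>t. y + 2 + 4 * t) ` {..<m}. cyc \<omega> (q+1) (i + 1)) = BB 3"
    unfolding BB_def image_image k3 ..
  have u3: "(\<Union>i\<in>(\<lambda>t. y + 4 * t) ` {..<m}. cyc \<omega> (q+1) (i + 1)) = BB 1"
    unfolding BB_def image_image k1 ..
  have e2: "E2 = AA 1 \<union> BB 3" unfolding E2_def J1 u2 AA_def ..
  have e3: "E3 = AA 3 \<union> BB 1" unfolding E3_def J2 u3 AA_def ..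
  show ?thesis
  proof
    fix z :: 'a
    show "gr_mult (gr_set E0) (gr_inv (gr_set E1)) z + gr_mult (gr_set E1) (gr_inv (gr_set E0)) z
    + gr_mult (gr_set E2) (gr_inv (gr_set E3)) z + gr_mult (gr_set E3) (gr_inv (gr_set E2)) z
    = (\<Sum>h\<in>{0::nat, 1}. \<Sum>i\<in>I. \<Sum>j\<in>I.
          gr_mult (gr_set (cyc \<omega> 8 (i + h))) (gr_inv (gr_set (cyc \<omega> 8 (j + 2 + h)))) z
        + gr_mult (gr_set (cyc \<omega> 8 (i + 2 + h))) (gr_inv (gr_set (cyc \<omega> 8 (j + h)))) z)
      + 8 * int m * (4 * int m + 1) * gr_set {0} z
      + int m * (28 * int m + 5) * gr_set (UNIV - {0}) z"
      by (rule main_id[OF e0 e1 e2 e3])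
  qed
qed


end
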